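(* Let $\Delta\geq 3$ be an integer. If $T$ is a rooted $(\Delta-1)$-ary tree of order $n$, then $$\sum_{u\in V(T)}n^{\downarrow}(u)\geq \frac{\Delta-2}{(\Delta-1)^2}\,n\left(\log_{(\Delta-1)}\big((\Delta-2)n\big)-1\right).$$
   Context: A rooted tree is $(\Delta-1)$-ary if every vertex has at most $\Delta-1$ children. For a vertex $u$ of a rooted tree $T$, $n^{\downarrow}(u)$ denotes the number of vertices of $T$ that are equal to $u$ or are descendants of $u$. *)

theory Defs
  imports Complex_Main
begin

text \<open>Finite rooted (ordered) trees: a node is given by the list of its children.
  Each occurrence of a Node in the tree is one vertex.\<close>
datatype rtree = Node "rtree list"

text \<open>Number of vertices (order) of a rooted tree; for a vertex u,
  the order of the subtree rooted at u is n-down(u).\<close>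
fun order :: "rtree \<Rightarrow> nat" where
  "order (Node ts) = 1 + sum_list (map order ts)"

text \<open>Sum over all vertices u of n-down(u): the root contributes the order of
  the whole tree, the other vertices are the vertices of the child subtrees.\<close>
fun sum_ndown :: "rtree \<Rightarrow> nat" where
  "sum_ndown (Node ts) = order (Node ts) + sum_list (map sum_ndown ts)"

fun is_kary :: "nat \<Rightarrow> rtree \<Rightarrow> bool" where
  "is_kary k (Node ts) = (length ts \<le> k \<and> (\<forall>t\<in>set ts. is_kary k t))"

end

theory Submission
  imports Defs
begin

lemma sum_list_affine:
  "sum_list (map (\<lambda>x. a * x + b) xs) = a * sum_list xs + b * real (length xs)"
  by (induction xs) (auto simp: algebra_simps)

lemma sum_list_lin:
  "sum_list (map (\<lambda>x. (a::real) * f x + b * x) xs) = a * sum_list (map f xs) + b * sum_list xs"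
  by (induction xs) (auto simp: algebra_simps)

lemma gibbs:
  fixes K :: real and xs :: "real list"
  assumes K: "K \<ge> 2" and pos: "\<forall>x\<in>set xs. x \<ge> 1" and len: "real (length xs) \<le> K"
  shows "sum_list xs * ln (sum_list xs) - sum_list xs * ln K \<le> sum_list (map (\<lambda>x. x * ln x) xs)"
proof -
  define s where "s = sum_list xs"
  have s0: "s \<ge> 0" unfolding s_def using pos by (induction xs) auto
  have mem: "x \<le> s" if "x \<in> set xs" for x
    unfolding s_def using pos that
    apply (induction xs)
     apply auto
    using order_trans[OF zero_le_one] by (force intro: add_increasing sum_list_nonneg)
  have trm: "x * ln s - x * ln K - s / K + x \<le> x * ln x" if x: "x \<in> set xs" for x
  proof -
    have x1: "x \<ge> 1" using pos x by auto
    have sp: "s > 0" using mem[OF x] x1 by linarith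
    have "ln (s / (K * x)) \<le> s / (K * x) - 1"
      by (rule ln_le_minus_one) (use sp x1 K in auto)
    moreover have "ln (s / (K * x)) = ln s - ln K - ln x"
      using sp x1 K by (simp add: ln_div ln_mult)
    ultimately have "ln s - ln K - ln x \<le> s / (K * x) - 1" by simp
    hence "x * (ln s - ln K - ln x) \<le> x * (s / (K * x) - 1)"
      using x1 by (intro mult_left_mono) auto
    also have "x * (s / (K * x) - 1) = s / K - x" using x1 K by (simp add: field_simps)
    finally show ?thesis by (simp add: algebra_simps)
  qed
  have "sum_list (map (\<lambda>x. (ln s - ln K + 1) * x + (- s / K)) xs) \<le> sum_list (map (\<lambda>x. x * ln x) xs)"
    by (rule sum_list_mono) (use trm in \<open>auto simp: algebra_simps\<close>)
  hence "(ln s - ln K + 1) * s - s / K * real (length xs) \<le> sum_list (map (\<lambda>x. x * ln x) xs)"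
    unfolding sum_list_affine s_def by simp
  moreover have "s / K * real (length xs) \<le> s"
  proof -
    have "s / K * real (length xs) \<le> s / K * K" using len s0 K by (intro mult_left_mono) auto
    also have "\<dots> = s" using K by simp
    finally show ?thesis .
  qed
  ultimately show ?thesis unfolding s_def[symmetric] by (simp add: algebra_simps)
qed

definition FF :: "real \<Rightarrow> real \<Rightarrow> real" where
  "FF K x = (K - 1) / K^2 * x * (log K ((K - 1) * x) - 1)"

lemma xlnx_diff:
  fixes s :: real assumes "s \<ge> 0"
  shows "(1 + s) * ln (1 + s) - s * ln s \<le> s + 1"
proof (cases "s = 0")
  case True thus ?thesis by simp
next
  case False
  hence sp: "s > 0" using assms by simp
  have a: "ln (1 + s) \<le> s" using sp by (intro ln_add_one_self_le_self) simp
  have "ln ((1 + s) / s) \<le> (1 + s) / s - 1" using sp by (intro ln_le_minus_one) simp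
  hence "ln (1 + s) - ln s \<le> 1 / s" using sp by (simp add: ln_div field_simps)
  hence "s * (ln (1 + s) - ln s) \<le> s * (1 / s)" using sp by (intro mult_left_mono) auto
  hence "s * (ln (1 + s) - ln s) \<le> 1" using sp by simp
  thus ?thesis using a by (simp add: algebra_simps)
qed

lemma final_arith:
  fixes a S P cs d s :: real
  assumes "a * (s + 1) \<le> 1 / 2 * (s + 1)" "cs \<le> 1 / 4 * s" "d * (1 + s) = d + d * s"
    "a * P \<le> a * S + a * (s + 1) + cs" "d \<le> 0" "0 \<le> s"
  shows "a * P + d * (1 + s) \<le> 1 + s + (a * S + d * s)"
proof -
  have "a * P + d * (1 + s) \<le> a * S + a * (s + 1) + cs + (d + d * s)" using assms(3,4) by simp
  also have "\<dots> \<le> a * S + 1 / 2 * (s + 1) + 1/4 * s + d * s" using assms(1,2,5) by linarith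
  also have "\<dots> \<le> 1 + s + (a * S + d * s)" using assms(6) by (simp add: field_simps)
  finally show ?thesis .
qed

lemma step:
  fixes K :: real and xs :: "real list"
  assumes K: "K \<ge> 2" and pos: "\<forall>x\<in>set xs. x \<ge> 1" and len: "real (length xs) \<le> K"
  shows "FF K (1 + sum_list xs) \<le> 1 + sum_list xs + sum_list (map (FF K) xs)"
proof -
  define s where "s = sum_list xs"
  define lk where "lk = ln K"
  define c where "c = (K - 1) / K^2"
  define d where "d = c * (ln (K - 1) / lk - 1)"
  have s0: "s \<ge> 0" unfolding s_def using pos by (intro sum_list_nonneg) auto
  have lkpos: "lk \<ge> 1/2"
  proof -
    have "ln (1 / K) \<le> 1 / K - 1" using K by (intro ln_le_minus_one) simp
    hence "- lk \<le> 1 / K - 1" using K by (simp add: lk_def ln_div)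
    moreover have "1 / K \<le> 1 / 2" using K by (simp add: field_simps)
    ultimately show ?thesis by linarith
  qed
  have c0: "c \<ge> 0" unfolding c_def using K by simp
  have c4: "c \<le> 1/4"
  proof -
    have "4 * (K - 1) \<le> K^2" using zero_le_power2[of "K - 2"]
      by (simp add: power2_eq_square algebra_simps)
    thus ?thesis unfolding c_def using K by (simp add: field_simps)
  qed
  have clk: "c / lk \<le> 1/2"
    using lkpos c4 c0 by (simp add: divide_simps)
  have clk0: "c / lk \<ge> 0" using c0 lkpos by simp
  have d0: "d \<le> 0"
  proof -
    have "ln (K - 1) \<le> lk" unfolding lk_def using K by simp
    hence "ln (K - 1) / lk \<le> 1" using lkpos by (simp add: divide_simps)
    thus ?thesis unfolding d_def using c0 by (simp add: mult_nonpos_nonneg mult_nonneg_nonpos)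
  qed
  have Fx: "FF K x = c / lk * (x * ln x) + d * x" if "x > 0" for x
  proof -
    have "ln ((K - 1) * x) = ln (K - 1) + ln x" using that K by (simp add: ln_mult)
    moreover have "ln K > 0" using K by simp
    ultimately show ?thesis unfolding FF_def c_def d_def lk_def log_def
      by (simp add: field_simps) (simp add: divide_simps algebra_simps)
  qed
  have "sum_list (map (FF K) xs) = sum_list (map (\<lambda>x. c / lk * (x * ln x) + d * x) xs)"
    using pos Fx by (intro arg_cong[where f=sum_list] map_cong) auto
  also have "\<dots> = c / lk * sum_list (map (\<lambda>x. x * ln x) xs) + d * s"
    unfolding s_def by (rule sum_list_lin)
  finally have sF: "sum_list (map (FF K) xs) = c / lk * sum_list (map (\<lambda>x. x * ln x) xs) + d * s" .
  have G: "s * ln s - s * lk \<le> sum_list (map (\<lambda>x. x * ln x) xs)"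
    using gibbs[OF K pos len] unfolding s_def lk_def .
  have F1: "FF K (1 + s) = c / lk * ((1 + s) * ln (1 + s)) + d * (1 + s)"
    using s0 by (intro Fx) simp
  have "c / lk * ((1 + s) * ln (1 + s)) \<le> c / lk * (s * ln s - s * lk + (s + 1 + s * lk))"
    using xlnx_diff[OF s0] clk0 by (intro mult_left_mono) auto
  also have "\<dots> = c / lk * (s * ln s - s * lk) + c / lk * (s + 1) + c * s"
    using lkpos by (simp add: field_simps)
  also have "\<dots> \<le> c / lk * sum_list (map (\<lambda>x. x * ln x) xs) + c / lk * (s + 1) + c * s"
    using mult_left_mono[OF G clk0] by simp
  finally have H: "c / lk * ((1 + s) * ln (1 + s)) \<le> c / lk * sum_list (map (\<lambda>x. x * ln x) xs) + c / lk * (s + 1) + c * s" .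
  have "c / lk * (s + 1) \<le> 1/2 * (s + 1)" using clk s0 by (intro mult_right_mono) auto
  moreover have "c * s \<le> 1/4 * s" using c4 s0 by (intro mult_right_mono) auto
  moreover have "d * (1 + s) = d + d * s" by (simp add: algebra_simps)
  ultimately show ?thesis unfolding s_def[symmetric] sF F1 using H d0 s0
    by (rule final_arith)
qed

lemma real_sum_list: "real (sum_list (map f ts)) = sum_list (map (\<lambda>t. real (f t)) ts)"
  by (induction ts) auto

lemma order_pos: "order t \<ge> 1"
  by (cases t) simp

lemma main:
  fixes k :: nat
  assumes "k \<ge> 2" "is_kary k T"
  shows "FF (real k) (real (order T)) \<le> real (sum_ndown T)"
  using assms(2)
proof (induction T)
  case (Node ts)
  have len: "real (length (map (\<lambda>t. real (order t)) ts)) \<le> real k" using Node.prems by simp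
  have pos: "\<forall>x\<in>set (map (\<lambda>t. real (order t)) ts). x \<ge> 1" using order_pos by auto
  have K: "real k \<ge> 2" using assms(1) by simp
  have IH: "sum_list (map (FF (real k)) (map (\<lambda>t. real (order t)) ts)) \<le> sum_list (map (\<lambda>t. real (sum_ndown t)) ts)"
    using Node by (simp add: o_def sum_list_mono)
  have "FF (real k) (real (order (Node ts))) = FF (real k) (1 + sum_list (map (\<lambda>t. real (order t)) ts))"
    by (simp add: real_sum_list)
  also have "\<dots> \<le> 1 + sum_list (map (\<lambda>t. real (order t)) ts) + sum_list (map (FF (real k)) (map (\<lambda>t. real (order t)) ts))"
    by (rule step[OF K pos len])
  also have "\<dots> \<le> 1 + sum_list (map (\<lambda>t. real (order t)) ts) + sum_list (map (\<lambda>t. real (sum_ndown t)) ts)"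
    using IH by simp
  also have "\<dots> = real (sum_ndown (Node ts))"
    by (simp add: real_sum_list)
  finally show ?case .
qed

theorem lemma3:
  fixes \<Delta> n :: nat and T :: rtree
  assumes "\<Delta> \<ge> 3"
    and "is_kary (\<Delta> - 1) T"
    and "order T = n"
  shows "real (sum_ndown T) \<ge>
    (real \<Delta> - 2) / (real \<Delta> - 1)^2 * real n *
      (log (real \<Delta> - 1) ((real \<Delta> - 2) * real n) - 1)"
proof -
  have "FF (real (\<Delta> - 1)) (real (order T)) \<le> real (sum_ndown T)"
    using main[of "\<Delta> - 1" T] assms by simp
  moreover have "real (\<Delta> - 1) = real \<Delta> - 1" using assms by simp
  ultimately show ?thesis using assms unfolding FF_def by (simp add: algebra_simps)
qed

end
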